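(* Let $G$ be a graph and let $xTy$ be a path-thread of $G$ with $x\ne y$. Let $T'$ be the path obtained from $T$ by deleting $x$ and $y$, and suppose $v(T')=3m+2$ for some integer $m\ge1$. Let $G'$ be obtained from $G-V(T')$ by adding a new vertex $z$ and the two new edges $xz$ and $yz$. Then $\lambda(G')\ge v(G')/4$ implies $\lambda(G)\ge v(G)/4$.
   Context: All graphs are finite and simple. $v(G)$ is the number of vertices. $\lambda(G)$ denotes the maximum number of pairwise vertex-disjoint subgraphs of $G$ each of which is a path with exactly two edges. A path-thread of $G$ is a path $P$ in $G$, maximal under inclusion among paths, such that every internal vertex of $P$ has degree $2$ in $G$; its end-vertices are $x,y$, written $xPy$. *)

theory Defs
  imports Complex_Main
begin

definition graph :: "'a set \<Rightarrow> 'a set set \<Rightarrow> bool" where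
  "graph V E \<longleftrightarrow> finite V \<and> (\<forall>e\<in>E. \<exists>a b. a \<noteq> b \<and> a \<in> V \<and> b \<in> V \<and> e = {a, b})"

definition degree :: "'a set set \<Rightarrow> 'a \<Rightarrow> nat" where
  "degree E v = card {e \<in> E. v \<in> e}"

definition is_path :: "'a set \<Rightarrow> 'a set set \<Rightarrow> 'a list \<Rightarrow> bool" where
  "is_path V E xs \<longleftrightarrow> xs \<noteq> [] \<and> distinct xs \<and> set xs \<subseteq> V \<and>
     (\<forall>i. Suc i < length xs \<longrightarrow> {xs ! i, xs ! Suc i} \<in> E)"

definition path_edges :: "'a list \<Rightarrow> 'a set set" where
  "path_edges xs = {{xs ! i, xs ! Suc i} | i. Suc i < length xs}"

definition internal_deg2 :: "'a set set \<Rightarrow> 'a list \<Rightarrow> bool" where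
  "internal_deg2 E xs \<longleftrightarrow> (\<forall>i. 0 < i \<and> Suc i < length xs \<longrightarrow> degree E (xs ! i) = 2)"

definition path_sub :: "'a list \<Rightarrow> 'a list \<Rightarrow> bool" where
  "path_sub xs ys \<longleftrightarrow> set xs \<subseteq> set ys \<and> path_edges xs \<subseteq> path_edges ys"

definition path_thread :: "'a set \<Rightarrow> 'a set set \<Rightarrow> 'a list \<Rightarrow> bool" where
  "path_thread V E xs \<longleftrightarrow> is_path V E xs \<and> internal_deg2 E xs \<and>
     \<not> (\<exists>ys. is_path V E ys \<and> internal_deg2 E ys \<and> path_sub xs ys \<and> \<not> path_sub ys xs)"

text \<open>lambda(G): maximum number of pairwise vertex-disjoint subgraphs that are paths with
  exactly two edges (a path [a,b,c]).\<close>

definition P3_packing :: "'a set \<Rightarrow> 'a set set \<Rightarrow> 'a list set \<Rightarrow> bool" where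
  "P3_packing V E P \<longleftrightarrow> (\<forall>p\<in>P. length p = 3 \<and> is_path V E p) \<and>
     pairwise (\<lambda>p q. set p \<inter> set q = {}) P"

definition lambda_P3 :: "'a set \<Rightarrow> 'a set set \<Rightarrow> nat" where
  "lambda_P3 V E = Max {card P | P. P3_packing V E P}"

end

theory Submission
  imports Defs
begin

lemma is_path_single[simp]: "is_path V E [a] \<longleftrightarrow> a \<in> V"
  by (simp add: is_path_def)

lemma is_path_Cons_Cons:
  "is_path V E (a # b # xs) \<longleftrightarrow> a \<in> V \<and> {a,b} \<in> E \<and> a \<notin> set (b#xs) \<and> is_path V E (b#xs)"
proof
  assume h: "is_path V E (a # b # xs)"
  have e: "\<And>i. Suc i < length (a#b#xs) \<Longrightarrow> {(a#b#xs) ! i, (a#b#xs) ! Suc i} \<in> E"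
    using h unfolding is_path_def by blast
  have 1: "{(b#xs) ! i, (b#xs) ! Suc i} \<in> E" if "Suc i < length (b#xs)" for i
  proof -
    have "Suc (Suc i) < length (a#b#xs)" using that by simp
    from e[OF this] show ?thesis by simp
  qed
  have 2: "{a,b} \<in> E" using e[of 0] by simp
  have 3: "distinct (a#b#xs)" "set (a#b#xs) \<subseteq> V" using h unfolding is_path_def by blast+
  show "a \<in> V \<and> {a,b} \<in> E \<and> a \<notin> set (b#xs) \<and> is_path V E (b#xs)"
    unfolding is_path_def using 1 2 3 by simp
next
  assume h: "a \<in> V \<and> {a,b} \<in> E \<and> a \<notin> set (b#xs) \<and> is_path V E (b#xs)"
  have e: "\<And>i. Suc i < length (b#xs) \<Longrightarrow> {(b#xs) ! i, (b#xs) ! Suc i} \<in> E"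
    using h unfolding is_path_def by blast
  have "{(a#b#xs) ! i, (a#b#xs) ! Suc i} \<in> E" if "Suc i < length (a#b#xs)" for i
  proof (cases i)
    case 0 then show ?thesis using h by simp
  next
    case (Suc j) then show ?thesis using e[of j] that by simp
  qed
  moreover have "distinct (b#xs)" "set (b#xs) \<subseteq> V" using h unfolding is_path_def by blast+
  ultimately show "is_path V E (a # b # xs)" using h unfolding is_path_def by simp
qed


lemma is_path_append:
  assumes "xs \<noteq> []" "ys \<noteq> []"
  shows "is_path V E (xs @ ys) \<longleftrightarrow> is_path V E xs \<and> is_path V E ys \<and> set xs \<inter> set ys = {} \<and> {last xs, hd ys} \<in> E"
  using assms
proof (induction xs)
  case Nil then show ?case by simp
next
  case (Cons a xs)
  obtain b ys' where ys: "ys = b # ys'" using Cons.prems by (cases ys) auto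
  show ?case
  proof (cases xs)
    case Nil then show ?thesis using ys by (simp add: is_path_Cons_Cons) blast
  next
    case (Cons c xs')
    note xsc = this
    have eq: "(a # xs) @ ys = a # c # (xs' @ ys)" using Cons by simp
    have IH: "is_path V E (c # xs' @ ys) \<longleftrightarrow> is_path V E (c#xs') \<and> is_path V E ys \<and> set (c#xs') \<inter> set ys = {} \<and> {last (c#xs'), hd ys} \<in> E"
      using Cons.IH[OF _ Cons.prems(2)] Cons by simp
    have L: "is_path V E ((a # xs) @ ys) \<longleftrightarrow> (a\<in>V \<and> {a,c}\<in>E \<and> a \<notin> set (c # xs'@ys) \<and> is_path V E (c#xs') \<and> is_path V E ys \<and> set (c#xs') \<inter> set ys = {} \<and> {last (c#xs'), hd ys} \<in> E)"
      unfolding eq is_path_Cons_Cons IH by simp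
    have R: "is_path V E (a # xs) \<longleftrightarrow> (a\<in>V \<and> {a,c}\<in>E \<and> a \<notin> set (c # xs') \<and> is_path V E (c#xs'))"
      unfolding xsc is_path_Cons_Cons by simp
    have la: "last (a # xs) = last (c # xs')" using xsc by simp
    show ?thesis unfolding L R la using xsc by auto
  qed
qed

lemma P3_packing_empty[simp]: "P3_packing V E {}"
  by (simp add: P3_packing_def)

lemma chunk:
  "is_path V E L \<Longrightarrow> 3*k \<le> length L \<Longrightarrow>
   \<exists>Q. P3_packing V E Q \<and> finite Q \<and> card Q = k \<and> (\<forall>q\<in>Q. set q \<subseteq> set L)"
proof (induction k arbitrary: L)
  case 0 then show ?case by (intro exI[of _ "{}"]) simp
next
  case (Suc k)
  obtain a L1 where L1: "L = a # L1" using Suc.prems(2) by (cases L) auto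
  obtain b L2 where L2: "L1 = b # L2" using Suc.prems(2) L1 by (cases L1) auto
  obtain c R where L3: "L2 = c # R" using Suc.prems(2) L1 L2 by (cases L2) auto
  have L: "L = [a,b,c] @ R" using L1 L2 L3 by simp
  have p3: "is_path V E [a,b,c]"
  proof (cases "R = []")
    case True then show ?thesis using Suc.prems L by simp
  next
    case False then show ?thesis using Suc.prems L is_path_append[of "[a,b,c]" R V E] by simp
  qed
  show ?case
  proof (cases "k = 0")
    case True
    then show ?thesis using p3 L
      by (intro exI[of _ "{[a,b,c]}"]) (auto simp: P3_packing_def)
  next
    case False
    then have Rne: "R \<noteq> []" using Suc.prems L by auto
    then have pR: "is_path V E R" and dj: "set [a,b,c] \<inter> set R = {}"
      using Suc.prems L is_path_append[of "[a,b,c]" R V E] by auto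
    obtain Q where Q: "P3_packing V E Q" "finite Q" "card Q = k" "\<forall>q\<in>Q. set q \<subseteq> set R"
      using Suc.IH[OF pR] Suc.prems L by auto
    have nin: "[a,b,c] \<notin> Q" using Q(4) dj by auto
    have "P3_packing V E (insert [a,b,c] Q)"
      using Q(1) p3 Q(4) dj unfolding P3_packing_def
      by (auto simp: pairwise_insert)
    moreover have "card (insert [a,b,c] Q) = Suc k" using Q nin by simp
    ultimately show ?thesis using Q L by (intro exI[of _ "insert [a,b,c] Q"]) auto
  qed
qed

lemma packing_bound:
  assumes "finite V" "P3_packing V E P"
  shows "finite P \<and> card P \<le> card {p. set p \<subseteq> V \<and> length p = 3}"
proof -
  have fin: "finite {p. set p \<subseteq> V \<and> length p = 3}"
    using finite_lists_length_eq[OF assms(1)] by simp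
  have "P \<subseteq> {p. set p \<subseteq> V \<and> length p = 3}"
    using assms(2) unfolding P3_packing_def is_path_def by auto
  then show ?thesis using fin by (meson card_mono finite_subset)
qed

lemma lambda_facts:
  assumes "finite V"
  shows "\<And>P. P3_packing V E P \<Longrightarrow> card P \<le> lambda_P3 V E"
    and "\<exists>P. P3_packing V E P \<and> card P = lambda_P3 V E"
proof -
  let ?S = "{card P | P. P3_packing V E P}"
  have "?S \<subseteq> {..card {p. set p \<subseteq> V \<and> length p = 3}}"
    using packing_bound[OF assms] by auto
  then have fS: "finite ?S" using finite_subset by blast
  have ne: "?S \<noteq> {}" using P3_packing_empty by blast
  show "\<And>P. P3_packing V E P \<Longrightarrow> card P \<le> lambda_P3 V E"
    unfolding lambda_P3_def using fS by (intro Max_ge) auto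
  show "\<exists>P. P3_packing V E P \<and> card P = lambda_P3 V E"
    using Max_in[OF fS ne] unfolding lambda_P3_def by auto
qed

lemma extend_packing:
  assumes "P3_packing V E P" "finite P" "is_path V E L" "3*k \<le> length L"
    and "\<forall>p\<in>P. set p \<inter> set L = {}"
  shows "\<exists>Q. P3_packing V E Q \<and> card Q = card P + k"
proof -
  obtain Q where Q: "P3_packing V E Q" "finite Q" "card Q = k" "\<forall>q\<in>Q. set q \<subseteq> set L"
    using chunk[OF assms(3,4)] by blast
  have ne: "set q \<noteq> {}" if "q \<in> Q" for q
  proof -
    have "length q = 3" using Q(1) that unfolding P3_packing_def by blast
    then show ?thesis by auto
  qed
  have dj: "P \<inter> Q = {}"
  proof (rule ccontr)
    assume "P \<inter> Q \<noteq> {}"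
    then obtain q where q: "q \<in> P" "q \<in> Q" by blast
    have "set q \<inter> set L = {}" using assms(5) q(1) by blast
    moreover have "set q \<subseteq> set L" using Q(4) q(2) by blast
    ultimately show False using ne[OF q(2)] by (metis Int_absorb2)
  qed
  have pw: "\<forall>a\<in>P. \<forall>b\<in>Q. a \<noteq> b \<longrightarrow> set a \<inter> set b = {} \<and> set b \<inter> set a = {}"
  proof (intro ballI impI)
    fix a b assume ab: "a \<in> P" "b \<in> Q"
    have "set a \<inter> set L = {}" using assms(5) ab(1) by blast
    moreover have "set b \<subseteq> set L" using Q(4) ab(2) by blast
    ultimately show "set a \<inter> set b = {} \<and> set b \<inter> set a = {}" by auto
  qed
  have "P3_packing V E (P \<union> Q)"
    unfolding P3_packing_def
  proof (intro conjI)
    show "\<forall>p\<in>P \<union> Q. length p = 3 \<and> is_path V E p"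
      using assms(1) Q(1) unfolding P3_packing_def by (metis Un_iff)
    have "pairwise (\<lambda>p q. set p \<inter> set q = {}) P" "pairwise (\<lambda>p q. set p \<inter> set q = {}) Q"
      using assms(1) Q(1) unfolding P3_packing_def by simp_all
    then have pP: "\<And>a b. a \<in> P \<Longrightarrow> b \<in> P \<Longrightarrow> a \<noteq> b \<Longrightarrow> set a \<inter> set b = {}"
      and pQ: "\<And>a b. a \<in> Q \<Longrightarrow> b \<in> Q \<Longrightarrow> a \<noteq> b \<Longrightarrow> set a \<inter> set b = {}"
      unfolding pairwise_def by metis+
    show "pairwise (\<lambda>p q. set p \<inter> set q = {}) (P \<union> Q)"
      unfolding pairwise_def
    proof (intro ballI impI)
      fix a b assume a: "a \<in> P \<union> Q" and b: "b \<in> P \<union> Q" and ab: "a \<noteq> b"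
      show "set a \<inter> set b = {}"
        using a b
      proof (elim UnE)
        assume "a \<in> P" "b \<in> P" then show ?thesis using pP ab by metis
      next
        assume "a \<in> P" "b \<in> Q" then show ?thesis using pw ab by simp
      next
        assume "a \<in> Q" "b \<in> P" then show ?thesis using pw ab by (metis Int_commute)
      next
        assume "a \<in> Q" "b \<in> Q" then show ?thesis using pQ ab by metis
      qed
    qed
  qed
  moreover have "card (P \<union> Q) = card P + k" using card_Un_disjoint[OF assms(2) Q(2) dj] Q(3) by simp
  ultimately show ?thesis by blast
qed

theorem lemma3p2:
  fixes V :: "'a set" and E :: "'a set set" and T :: "'a list" and z :: 'a and m :: nat
  assumes "graph V E"
    and "path_thread V E T"
    and "hd T \<noteq> last T"
    and "card (set (butlast (tl T))) = 3 * m + 2"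
    and "m \<ge> 1"
    and "z \<notin> V"
  defines "V' \<equiv> (V - set (butlast (tl T))) \<union> {z}"
    and "E' \<equiv> {e \<in> E. e \<inter> set (butlast (tl T)) = {}} \<union> {{hd T, z}, {last T, z}}"
  assumes "real (lambda_P3 V' E') \<ge> real (card V') / 4"
  shows "real (lambda_P3 V E) \<ge> real (card V) / 4"
proof -
  have fin: "finite V" using assms(1) unfolding graph_def by blast
  have Eok: "\<And>e. e \<in> E \<Longrightarrow> \<exists>a b. a \<noteq> b \<and> a \<in> V \<and> b \<in> V \<and> e = {a,b}"
    using assms(1) unfolding graph_def by blast
  have zE: "z \<notin> e" if "e \<in> E" for e
    using Eok[OF that] assms(6) by auto
  have pT: "is_path V E T" using assms(2) unfolding path_thread_def by blast
  have "T \<noteq> []" using pT unfolding is_path_def by blast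
  then obtain x R where TR: "T = x # R" by (cases T) auto
  have "R \<noteq> []" using assms(3) TR by auto
  then obtain ts y where Rts: "R = ts @ [y]" by (cases R rule: rev_cases) auto
  have T: "T = x # ts @ [y]" using TR Rts by simp
  have bt: "butlast (tl T) = ts" using T by simp
  have hdT: "hd T = x" "last T = y" using T by simp_all
  have dT: "distinct T" and sT: "set T \<subseteq> V" using pT unfolding is_path_def by blast+
  have lts: "length ts = 3*m+2" using assms(4) bt dT T by (simp add: distinct_card)
  have tsne: "ts \<noteq> []" using lts by auto
  have "is_path V E ([x] @ (ts @ [y]))" using pT T by simp
  then have p1: "is_path V E (ts @ [y])" and e1: "{x, hd ts} \<in> E" and d1: "x \<notin> set ts"
    using is_path_append[of "[x]" "ts @ [y]" V E] tsne by auto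
  then have p2: "is_path V E ts" and e2: "{last ts, y} \<in> E" and d2: "y \<notin> set ts"
    using is_path_append[of ts "[y]" V E] tsne by auto
  have xV: "x \<in> V" and yV: "y \<in> V" using sT T by auto
  have pxts: "is_path V E (x # ts)"
    using is_path_append[of "[x]" ts V E] tsne xV p2 d1 e1 by simp
  define S where "S = set ts"
  have SV: "S \<subseteq> V" using sT T S_def by auto
  have cS: "card S = 3*m+2" using assms(4) bt S_def by simp
  have V'eq: "V' = (V - S) \<union> {z}" using V'_def bt S_def by simp
  have E'eq: "E' = {e \<in> E. e \<inter> S = {}} \<union> {{x,z},{y,z}}" using E'_def bt hdT S_def by simp
  have finV': "finite V'" using V'eq fin by simp
  obtain P' where P': "P3_packing V' E' P'" "card P' = lambda_P3 V' E'"
    using lambda_facts(2)[OF finV'] by blast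
  have finP': "finite P'" using packing_bound[OF finV' P'(1)] by blast
  have tr: "is_path V E p \<and> set p \<inter> S = {}" if h: "is_path V' E' p" "z \<notin> set p" for p
  proof -
    have sub: "set p \<subseteq> V - S" using h V'eq unfolding is_path_def by auto
    have "{p!i, p!Suc i} \<in> E" if i: "Suc i < length p" for i
    proof -
      have e: "{p!i,p!Suc i} \<in> E'" using h(1) i unfolding is_path_def by blast
      have "p!i \<in> set p" "p!Suc i \<in> set p" using i by simp_all
      then have "z \<noteq> p!i" "z \<noteq> p!Suc i" using h(2) by auto
      then show ?thesis using e E'eq by (auto simp: doubleton_eq_iff)
    qed
    then show ?thesis using h sub unfolding is_path_def by auto
  qed
  have zedge: "u = x \<or> u = y" if "{u,z} \<in> E'" "u \<noteq> z" for u
    using that E'eq zE by (auto simp: doubleton_eq_iff)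
  have key: "\<exists>Q. P3_packing V E Q \<and> card Q = card P' + m"
  proof (cases "\<exists>p0\<in>P'. z \<in> set p0")
    case False
    then have "\<forall>p\<in>P'. is_path V E p \<and> set p \<inter> S = {}" using tr P'(1) unfolding P3_packing_def by blast
    then have "P3_packing V E P'" and dj: "\<forall>p\<in>P'. set p \<inter> set ts = {}"
      using P'(1) S_def unfolding P3_packing_def by auto
    then show ?thesis using extend_packing[of V E P' ts m] finP' p2 lts by simp
  next
    case True
    then obtain p0 where p0: "p0 \<in> P'" "z \<in> set p0" by blast
    have l3: "length p0 = 3" and pp0: "is_path V' E' p0" using P'(1) p0(1) unfolding P3_packing_def by blast+
    obtain a q1 where q1: "p0 = a # q1" using l3 by (cases p0) auto
    obtain b q2 where q2: "q1 = b # q2" using l3 q1 by (cases q1) auto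
    obtain c q3 where q3: "q2 = c # q3" using l3 q1 q2 by (cases q2) auto
    have abc: "p0 = [a,b,c]" using l3 q1 q2 q3 by simp
    have ab: "{a,b} \<in> E'" "{b,c} \<in> E'" "a \<noteq> b" "b \<noteq> c" "a \<noteq> c"
      using pp0 abc by (auto simp: is_path_Cons_Cons)
    have xy: "x \<in> set p0 \<or> y \<in> set p0"
    proof -
      have "z = a \<or> z = b \<or> z = c" using p0(2) abc by auto
      moreover have "b = x \<or> b = y" if "z = a"
        using zedge[of b] ab that by (metis insert_commute)
      moreover have "a = x \<or> a = y" if "z = b"
        using zedge[of a] ab that by metis
      moreover have "b = x \<or> b = y" if "z = c"
        using zedge[of b] ab that by metis
      ultimately show ?thesis using abc by auto
    qed
    have xz: "x \<noteq> z" "y \<noteq> z" using xV yV assms(6) by auto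
    obtain L where L: "is_path V E L" "3*(m+1) \<le> length L" "set L \<subseteq> (set p0 - {z}) \<union> S"
    proof (cases "x \<in> set p0")
      case True
      then show ?thesis using that[of "x # ts"] pxts lts S_def xz by auto
    next
      case False
      then have "y \<in> set p0" using xy by blast
      then show ?thesis using that[of "ts @ [y]"] p1 lts S_def xz by auto
    qed
    define P'' where "P'' = P' - {p0}"
    have dp: "set p \<inter> set p0 = {}" if "p \<in> P''" for p
      using P'(1) that p0(1) unfolding P''_def P3_packing_def pairwise_def by auto
    have trp: "is_path V E p \<and> set p \<inter> S = {}" if "p \<in> P''" for p
    proof -
      have "z \<notin> set p" using dp[OF that] p0(2) by auto
      moreover have "is_path V' E' p" using that P'(1) unfolding P''_def P3_packing_def by auto
      ultimately show ?thesis using tr by blast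
    qed
    have pk: "P3_packing V E P''"
      using P'(1) trp unfolding P3_packing_def P''_def pairwise_def by auto
    have djL: "\<forall>p\<in>P''. set p \<inter> set L = {}"
    proof
      fix p assume "p \<in> P''"
      then have "set p \<inter> set p0 = {}" "set p \<inter> S = {}" using dp trp by auto
      then show "set p \<inter> set L = {}" using L(3) by auto
    qed
    have finP'': "finite P''" using finP' P''_def by simp
    obtain Q where Q: "P3_packing V E Q" "card Q = card P'' + (m+1)"
      using extend_packing[OF pk finP'' L(1) L(2) djL] by blast
    have "card P'' = card P' - 1" using P''_def p0(1) finP' by simp
    moreover have "card P' \<ge> 1" using p0(1) finP' by (metis One_nat_def Suc_leI card_gt_0_iff empty_iff)
    ultimately have "card Q = card P' + m" using Q(2) by simp
    then show ?thesis using Q(1) by blast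
  qed
  then obtain Q where Q: "P3_packing V E Q" "card Q = card P' + m" by blast
  have lam: "lambda_P3 V E \<ge> lambda_P3 V' E' + m" using lambda_facts(1)[OF fin Q(1)] Q(2) P'(2) by simp
  have "card (V - S) = card V - card S" using SV fin by (simp add: card_Diff_subset finite_subset)
  moreover have "card V' = Suc (card (V - S))" using V'eq assms(6) fin by simp
  moreover have "card S \<le> card V" using SV fin by (simp add: card_mono)
  ultimately have cV: "card V = card V' + 3*m + 1" using cS by simp
  have "real (lambda_P3 V E) \<ge> real (lambda_P3 V' E') + real m" using lam by linarith
  moreover have "real (card V) = real (card V') + 3 * real m + 1" using cV by simp
  moreover have "real m \<ge> 1" using assms(5) by simp
  ultimately show ?thesis using assms(9) by linarith
qed

end
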